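(* Let $M$ and $N$ be conical monoids, $I$ an order-ideal of $M$, and $\varphi\colon I\to\varphi(I)$ a monoid isomorphism onto an order-ideal $\varphi(I)$ of $N$. Let $P=(M\times N)/\!\sim$, where $\sim$ is the monoid congruence on $M\times N$ generated by the pairs $((s,0),(0,\varphi(s)))$, $s\in I$, and define $\iota_1\colon M\to P$, $\iota_1(x)=[(x,0)]$, and $\iota_2\colon N\to P$, $\iota_2(y)=[(0,y)]$. Then: (1) $\iota_1,\iota_2$ form a pushout of the diagram $M\hookleftarrow I\xrightarrow{\varphi}N$ in the category of monoids; (2) $\iota_1$ and $\iota_2$ are injective; (3) $I'=\iota_1(I)=\iota_2(\varphi(I))$ is an order-ideal of $P$ and $P/I'\cong M/I\times N/\varphi(I)$; (4) if $Q$ is a conical refinement monoid and $\theta_1\colon M\to Q$, $\theta_2\colon N\to Q$ are injective monoid homomorphisms with $\theta_1|_I=\theta_2\circ\varphi$, $\theta_1(M)\cap\theta_2(N)=\theta_1(I)=\theta_2(\varphi(I))$, and $\theta_1(M),\theta_2(N)$ order-ideals of $Q$, then there is an injective monoid homomorphism $\iota\colon P\to Q$ with $\theta_i=\iota\circ\iota_i$ for $i=1,2$.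
   Context: Monoids are abelian. A monoid is conical if $x+y=0$ implies $x=y=0$. An order-ideal of $M$ is a nonempty $I\subseteq M$ with $x+y\in I\iff x,y\in I$. For an order-ideal $I$, $M/I$ is the quotient by the congruence $x\equiv y\iff x+u=y+v$ for some $u,v\in I$. A refinement monoid is one in which every $x_1+x_2=y_1+y_2$ admits $x_{ij}$ with $x_i=x_{i1}+x_{i2}$, $y_j=x_{1j}+x_{2j}$. *)

theory Defs
  imports "HOL-Algebra.Group"
begin

text \<open>All monoids are commutative monoids in the sense of HOL-Algebra (written multiplicatively:
  the paper's x+y is x \<otimes> y and 0 is \<one>).\<close>

definition conical :: "('a, 'm) monoid_scheme \<Rightarrow> bool" where
  "conical G \<longleftrightarrow> (\<forall>x\<in>carrier G. \<forall>y\<in>carrier G. x \<otimes>\<^bsub>G\<^esub> y = \<one>\<^bsub>G\<^esub> \<longrightarrow> x = \<one>\<^bsub>G\<^esub> \<and> y = \<one>\<^bsub>G\<^esub>)"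

definition order_ideal :: "('a, 'm) monoid_scheme \<Rightarrow> 'a set \<Rightarrow> bool" where
  "order_ideal G I \<longleftrightarrow> I \<subseteq> carrier G \<and> I \<noteq> {} \<and>
     (\<forall>x\<in>carrier G. \<forall>y\<in>carrier G. x \<otimes>\<^bsub>G\<^esub> y \<in> I \<longleftrightarrow> x \<in> I \<and> y \<in> I)"

definition refinement_monoid :: "('a, 'm) monoid_scheme \<Rightarrow> bool" where
  "refinement_monoid G \<longleftrightarrow>
     (\<forall>x1\<in>carrier G. \<forall>x2\<in>carrier G. \<forall>y1\<in>carrier G. \<forall>y2\<in>carrier G.
        x1 \<otimes>\<^bsub>G\<^esub> x2 = y1 \<otimes>\<^bsub>G\<^esub> y2 \<longrightarrow>
        (\<exists>x11\<in>carrier G. \<exists>x12\<in>carrier G. \<exists>x21\<in>carrier G. \<exists>x22\<in>carrier G.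
           x1 = x11 \<otimes>\<^bsub>G\<^esub> x12 \<and> x2 = x21 \<otimes>\<^bsub>G\<^esub> x22 \<and>
           y1 = x11 \<otimes>\<^bsub>G\<^esub> x21 \<and> y2 = x12 \<otimes>\<^bsub>G\<^esub> x22))"

definition monoid_congruence :: "('a, 'm) monoid_scheme \<Rightarrow> ('a \<times> 'a) set \<Rightarrow> bool" where
  "monoid_congruence G R \<longleftrightarrow> equiv (carrier G) R \<and>
     (\<forall>a b c d. (a, b) \<in> R \<longrightarrow> (c, d) \<in> R \<longrightarrow> (a \<otimes>\<^bsub>G\<^esub> c, b \<otimes>\<^bsub>G\<^esub> d) \<in> R)"

definition generated_congruence :: "('a, 'm) monoid_scheme \<Rightarrow> ('a \<times> 'a) set \<Rightarrow> ('a \<times> 'a) set" where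
  "generated_congruence G S = \<Inter>{R. monoid_congruence G R \<and> S \<subseteq> R}"

definition quotient_monoid :: "('a, 'm) monoid_scheme \<Rightarrow> ('a \<times> 'a) set \<Rightarrow> 'a set monoid" where
  "quotient_monoid G R =
     \<lparr>carrier = carrier G // R,
      mult = (\<lambda>A B. \<Union>a\<in>A. \<Union>b\<in>B. R `` {a \<otimes>\<^bsub>G\<^esub> b}),
      one = R `` {\<one>\<^bsub>G\<^esub>}\<rparr>"

definition ideal_congruence :: "('a, 'm) monoid_scheme \<Rightarrow> 'a set \<Rightarrow> ('a \<times> 'a) set" where
  "ideal_congruence G I = {(x, y). x \<in> carrier G \<and> y \<in> carrier G \<and>
      (\<exists>u\<in>I. \<exists>v\<in>I. x \<otimes>\<^bsub>G\<^esub> u = y \<otimes>\<^bsub>G\<^esub> v)}"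

definition quotient_by_ideal :: "('a, 'm) monoid_scheme \<Rightarrow> 'a set \<Rightarrow> 'a set monoid" where
  "quotient_by_ideal G I = quotient_monoid G (ideal_congruence G I)"

definition pushout_congruence ::
  "'a monoid \<Rightarrow> 'b monoid \<Rightarrow> 'a set \<Rightarrow> ('a \<Rightarrow> 'b) \<Rightarrow> (('a \<times> 'b) \<times> ('a \<times> 'b)) set" where
  "pushout_congruence M N I \<phi> =
     generated_congruence (M \<times>\<times> N) {((s, \<one>\<^bsub>N\<^esub>), (\<one>\<^bsub>M\<^esub>, \<phi> s)) | s. s \<in> I}"

definition pushout_monoid :: "'a monoid \<Rightarrow> 'b monoid \<Rightarrow> 'a set \<Rightarrow> ('a \<Rightarrow> 'b) \<Rightarrow> ('a \<times> 'b) set monoid" where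
  "pushout_monoid M N I \<phi> = quotient_monoid (M \<times>\<times> N) (pushout_congruence M N I \<phi>)"

definition iota1 :: "'a monoid \<Rightarrow> 'b monoid \<Rightarrow> 'a set \<Rightarrow> ('a \<Rightarrow> 'b) \<Rightarrow> 'a \<Rightarrow> ('a \<times> 'b) set" where
  "iota1 M N I \<phi> x = pushout_congruence M N I \<phi> `` {(x, \<one>\<^bsub>N\<^esub>)}"

definition iota2 :: "'a monoid \<Rightarrow> 'b monoid \<Rightarrow> 'a set \<Rightarrow> ('a \<Rightarrow> 'b) \<Rightarrow> 'b \<Rightarrow> ('a \<times> 'b) set" where
  "iota2 M N I \<phi> y = pushout_congruence M N I \<phi> `` {(\<one>\<^bsub>M\<^esub>, y)}"

end

theory Submission
  imports Defs
begin

lemma congI: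
  fixes G (structure)
  assumes mc: "\<And>x y. x \<in> carrier G \<Longrightarrow> y \<in> carrier G \<Longrightarrow> x \<otimes> y \<in> carrier G"
    and rf: "\<And>x. x \<in> carrier G \<Longrightarrow> Q x x"
    and sy: "\<And>x y. x \<in> carrier G \<Longrightarrow> y \<in> carrier G \<Longrightarrow> Q x y \<Longrightarrow> Q y x"
    and tr: "\<And>x y z. x \<in> carrier G \<Longrightarrow> y \<in> carrier G \<Longrightarrow> z \<in> carrier G \<Longrightarrow> Q x y \<Longrightarrow> Q y z \<Longrightarrow> Q x z"
    and cg: "\<And>a b c d. a \<in> carrier G \<Longrightarrow> b \<in> carrier G \<Longrightarrow> c \<in> carrier G \<Longrightarrow> d \<in> carrier G
       \<Longrightarrow> Q a b \<Longrightarrow> Q c d \<Longrightarrow> Q (a \<otimes> c) (b \<otimes> d)"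
  shows "monoid_congruence G {(x,y). x \<in> carrier G \<and> y \<in> carrier G \<and> Q x y}"
  unfolding monoid_congruence_def equiv_def
proof (intro conjI allI impI)
  show "refl_on (carrier G) {(x, y). x \<in> carrier G \<and> y \<in> carrier G \<and> Q x y}"
    unfolding refl_on_def using rf by blast
  show "sym {(x, y). x \<in> carrier G \<and> y \<in> carrier G \<and> Q x y}"
    unfolding sym_def using sy by blast
  show "trans {(x, y). x \<in> carrier G \<and> y \<in> carrier G \<and> Q x y}"
    unfolding trans_def using tr by blast
  fix a b c d assume "(a, b) \<in> {(x, y). x \<in> carrier G \<and> y \<in> carrier G \<and> Q x y}"
    "(c, d) \<in> {(x, y). x \<in> carrier G \<and> y \<in> carrier G \<and> Q x y}"
  then show "(a \<otimes> c, b \<otimes> d) \<in> {(x, y). x \<in> carrier G \<and> y \<in> carrier G \<and> Q x y}"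
    using cg mc by blast
qed auto

lemma gen_cong:
  fixes G (structure)
  assumes "monoid G" "S \<subseteq> carrier G \<times> carrier G"
  shows "monoid_congruence G (generated_congruence G S)"
    and "S \<subseteq> generated_congruence G S"
    and "monoid_congruence G R \<Longrightarrow> S \<subseteq> R \<Longrightarrow> generated_congruence G S \<subseteq> R"
proof -
  interpret monoid G by fact
  have U: "monoid_congruence G (carrier G \<times> carrier G)"
    unfolding monoid_congruence_def equiv_def refl_on_def sym_def trans_def by auto
  let ?F = "{R. monoid_congruence G R \<and> S \<subseteq> R}"
  have sub: "generated_congruence G S \<subseteq> carrier G \<times> carrier G"
    unfolding generated_congruence_def using U assms(2) by blast
  show "monoid_congruence G (generated_congruence G S)"
    unfolding monoid_congruence_def equiv_def
  proof (intro conjI allI impI)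
    show "generated_congruence G S \<subseteq> carrier G \<times> carrier G" by fact
    show "refl_on (carrier G) (generated_congruence G S)"
      unfolding refl_on_def generated_congruence_def monoid_congruence_def equiv_def refl_on_def by blast
    show "sym (generated_congruence G S)"
      unfolding sym_def generated_congruence_def monoid_congruence_def equiv_def sym_def by blast
    show "trans (generated_congruence G S)"
      unfolding trans_def generated_congruence_def monoid_congruence_def equiv_def
      by (smt (verit, ccfv_threshold) Inter_iff mem_Collect_eq trans_def)
    fix a b c d assume "(a, b) \<in> generated_congruence G S" "(c, d) \<in> generated_congruence G S"
    then show "(a \<otimes> c, b \<otimes> d) \<in> generated_congruence G S"
      unfolding generated_congruence_def monoid_congruence_def by blast
  qed
  show "S \<subseteq> generated_congruence G S" unfolding generated_congruence_def by blast
  show "monoid_congruence G R \<Longrightarrow> S \<subseteq> R \<Longrightarrow> generated_congruence G S \<subseteq> R"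
    unfolding generated_congruence_def by blast
qed

lemma quot_mult:
  fixes G (structure)
  assumes "monoid_congruence G R" "a \<in> carrier G" "b \<in> carrier G"
  shows "R``{a} \<otimes>\<^bsub>quotient_monoid G R\<^esub> R``{b} = R``{a \<otimes> b}"
proof -
  have eq: "equiv (carrier G) R" using assms(1) unfolding monoid_congruence_def by blast
  have cl: "\<And>a' b'. (a,a') \<in> R \<Longrightarrow> (b,b') \<in> R \<Longrightarrow> R``{a' \<otimes> b'} = R``{a \<otimes> b}"
  proof -
    fix a' b' assume "(a,a') \<in> R" "(b,b') \<in> R"
    then have "(a \<otimes> b, a' \<otimes> b') \<in> R" using assms(1) unfolding monoid_congruence_def by blast
    then show "R``{a' \<otimes> b'} = R``{a \<otimes> b}" using equiv_class_eq[OF eq] by metis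
  qed
  have "a \<in> R``{a}" "b \<in> R``{b}" using equiv_class_self[OF eq] assms by auto
  have "(\<Union>a'\<in>R``{a}. \<Union>b'\<in>R``{b}. R``{a' \<otimes> b'}) = (\<Union>a'\<in>R``{a}. \<Union>b'\<in>R``{b}. R``{a \<otimes> b})"
    by (intro SUP_cong refl) (metis cl Image_singleton_iff)
  also have "\<dots> = R``{a \<otimes> b}" using \<open>a \<in> R``{a}\<close> \<open>b \<in> R``{b}\<close> by blast
  finally show ?thesis unfolding quotient_monoid_def by simp
qed

lemma quot_one: "\<one>\<^bsub>quotient_monoid G R\<^esub> = R``{\<one>\<^bsub>G\<^esub>}"
  and quot_carrier: "carrier (quotient_monoid G R) = carrier G // R"
  by (simp_all add: quotient_monoid_def)

lemma quot_comm_monoid: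
  fixes G (structure)
  assumes "comm_monoid G" "monoid_congruence G R"
  shows "comm_monoid (quotient_monoid G R)"
proof -
  interpret comm_monoid G by fact
  have eq: "equiv (carrier G) R" using assms(2) unfolding monoid_congruence_def by blast
  note qm = quot_mult[OF assms(2)]
  show ?thesis
  proof (rule comm_monoidI)
    fix x y assume "x \<in> carrier (quotient_monoid G R)" "y \<in> carrier (quotient_monoid G R)"
    then obtain a b where "x = R``{a}" "y = R``{b}" "a \<in> carrier G" "b \<in> carrier G"
      by (auto simp: quot_carrier elim!: quotientE)
    then show "x \<otimes>\<^bsub>quotient_monoid G R\<^esub> y \<in> carrier (quotient_monoid G R)"
      and "x \<otimes>\<^bsub>quotient_monoid G R\<^esub> y = y \<otimes>\<^bsub>quotient_monoid G R\<^esub> x"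
      by (auto simp: qm quot_carrier quotientI m_comm)
  next
    show "\<one>\<^bsub>quotient_monoid G R\<^esub> \<in> carrier (quotient_monoid G R)"
      by (simp add: quot_one quot_carrier quotientI)
  next
    fix x y z assume "x \<in> carrier (quotient_monoid G R)" "y \<in> carrier (quotient_monoid G R)"
       "z \<in> carrier (quotient_monoid G R)"
    then obtain a b c where "x = R``{a}" "y = R``{b}" "z = R``{c}" "a \<in> carrier G" "b \<in> carrier G" "c \<in> carrier G"
      by (auto simp: quot_carrier elim!: quotientE)
    then show "x \<otimes>\<^bsub>quotient_monoid G R\<^esub> y \<otimes>\<^bsub>quotient_monoid G R\<^esub> z =
        x \<otimes>\<^bsub>quotient_monoid G R\<^esub> (y \<otimes>\<^bsub>quotient_monoid G R\<^esub> z)"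
      by (simp add: qm m_assoc)
  next
    fix x assume "x \<in> carrier (quotient_monoid G R)"
    then obtain a where "x = R``{a}" "a \<in> carrier G"
      by (auto simp: quot_carrier elim!: quotientE)
    then show "\<one>\<^bsub>quotient_monoid G R\<^esub> \<otimes>\<^bsub>quotient_monoid G R\<^esub> x = x"
      by (simp add: qm quot_one)
  qed
qed

lemma ideal_one:
  fixes G (structure)
  assumes "monoid G" "order_ideal G I" shows "\<one> \<in> I"
proof -
  interpret monoid G by fact
  obtain s where s: "s \<in> I" using assms(2) unfolding order_ideal_def by blast
  have sc: "s \<in> carrier G" using s assms(2) unfolding order_ideal_def by blast
  have "s \<otimes> \<one> \<in> I" using s sc by simp
  then show ?thesis using assms(2) sc unfolding order_ideal_def by blast
qed

lemma ideal_cong: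
  fixes G (structure)
  assumes "comm_monoid G" "order_ideal G I"
  shows "monoid_congruence G (ideal_congruence G I)"
proof -
  interpret comm_monoid G by fact
  have Ic: "I \<subseteq> carrier G" using assms(2) unfolding order_ideal_def by blast
  have Im: "\<And>u v. u \<in> I \<Longrightarrow> v \<in> I \<Longrightarrow> u \<otimes> v \<in> I" using assms(2) Ic unfolding order_ideal_def by blast
  have one: "\<one> \<in> I" using ideal_one assms by (metis comm_monoid.axioms(1))
  have "monoid_congruence G {(x,y). x \<in> carrier G \<and> y \<in> carrier G \<and> (\<exists>u\<in>I. \<exists>v\<in>I. x \<otimes> u = y \<otimes> v)}"
  proof (rule congI)
    show "\<And>x. x \<in> carrier G \<Longrightarrow> \<exists>u\<in>I. \<exists>v\<in>I. x \<otimes> u = x \<otimes> v" using one by blast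
    show "\<And>x y. \<exists>u\<in>I. \<exists>v\<in>I. x \<otimes> u = y \<otimes> v \<Longrightarrow> \<exists>u\<in>I. \<exists>v\<in>I. y \<otimes> u = x \<otimes> v" by metis
    show "\<exists>u\<in>I. \<exists>v\<in>I. x \<otimes> u = z \<otimes> v"
      if h: "x \<in> carrier G" "y \<in> carrier G" "z \<in> carrier G" "\<exists>u\<in>I. \<exists>v\<in>I. x \<otimes> u = y \<otimes> v"
         "\<exists>u\<in>I. \<exists>v\<in>I. y \<otimes> u = z \<otimes> v" for x y z
    proof -
      obtain u v u' v' where uv: "u \<in> I" "v \<in> I" "u' \<in> I" "v' \<in> I" "x \<otimes> u = y \<otimes> v" "y \<otimes> u' = z \<otimes> v'"
        using h by blast
      have c: "u \<in> carrier G" "v \<in> carrier G" "u' \<in> carrier G" "v' \<in> carrier G" using uv Ic by auto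
      have "x \<otimes> (u \<otimes> u') = (x \<otimes> u) \<otimes> u'" using c h by (simp add: m_assoc)
      also have "\<dots> = (y \<otimes> v) \<otimes> u'" using uv by simp
      also have "\<dots> = (y \<otimes> u') \<otimes> v" using c h by (simp add: m_ac)
      also have "\<dots> = (z \<otimes> v') \<otimes> v" using uv by simp
      also have "\<dots> = z \<otimes> (v' \<otimes> v)" using uv c h by (simp add: m_assoc)
      finally show ?thesis using uv Im by blast
    qed
    show "\<exists>u\<in>I. \<exists>v\<in>I. a \<otimes> c \<otimes> u = b \<otimes> d \<otimes> v"
      if h: "a \<in> carrier G" "b \<in> carrier G" "c \<in> carrier G" "d \<in> carrier G" "\<exists>u\<in>I. \<exists>v\<in>I. a \<otimes> u = b \<otimes> v"
         "\<exists>u\<in>I. \<exists>v\<in>I. c \<otimes> u = d \<otimes> v" for a b c d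
    proof -
      obtain u v u' v' where uv: "u \<in> I" "v \<in> I" "u' \<in> I" "v' \<in> I" "a \<otimes> u = b \<otimes> v" "c \<otimes> u' = d \<otimes> v'"
        using h by blast
      have cc: "u \<in> carrier G" "v \<in> carrier G" "u' \<in> carrier G" "v' \<in> carrier G" using uv Ic by auto
      have "a \<otimes> c \<otimes> (u \<otimes> u') = (a \<otimes> u) \<otimes> (c \<otimes> u')" using cc h by (simp add: m_ac)
      also have "\<dots> = (b \<otimes> v) \<otimes> (d \<otimes> v')" using uv by simp
      also have "\<dots> = b \<otimes> d \<otimes> (v \<otimes> v')" using cc h by (simp add: m_ac)
      finally show ?thesis using uv Im by blast
    qed
  qed auto
  then show ?thesis unfolding ideal_congruence_def .
qed


lemma some_class:
  assumes "equiv A r" "x \<in> A"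
  shows "(x, SOME y. y \<in> r``{x}) \<in> r" "r``{SOME y. y \<in> r``{x}} = r``{x}"
proof -
  have "x \<in> r``{x}" using equiv_class_self[OF assms] .
  then have "(SOME y. y \<in> r``{x}) \<in> r``{x}" by (rule someI)
  then show "(x, SOME y. y \<in> r``{x}) \<in> r" by simp
  then show "r``{SOME y. y \<in> r``{x}} = r``{x}" using equiv_class_eq[OF assms(1)] by metis
qed

locale PO =
  fixes M :: "'a monoid" and N :: "'b monoid" and I :: "'a set" and \<phi> :: "'a \<Rightarrow> 'b"
  assumes cM: "comm_monoid M" and cN: "comm_monoid N"
    and oI: "order_ideal M I" and oJ: "order_ideal N (\<phi> ` I)"
    and isophi: "\<phi> \<in> iso (M\<lparr>carrier := I\<rparr>) (N\<lparr>carrier := \<phi> ` I\<rparr>)"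
begin

sublocale M: comm_monoid M by (rule cM)
sublocale N: comm_monoid N by (rule cN)

abbreviation "R \<equiv> pushout_congruence M N I \<phi>"
abbreviation "P \<equiv> pushout_monoid M N I \<phi>"
abbreviation "J \<equiv> \<phi> ` I"
abbreviation "S \<equiv> {((s, \<one>\<^bsub>N\<^esub>), (\<one>\<^bsub>M\<^esub>, \<phi> s)) | s. s \<in> I}"

lemma Ic: "I \<subseteq> carrier M" and Jc: "J \<subseteq> carrier N"
  using oI oJ unfolding order_ideal_def by auto

lemma I_mult: "s \<in> I \<Longrightarrow> t \<in> I \<Longrightarrow> s \<otimes>\<^bsub>M\<^esub> t \<in> I"
  using oI Ic unfolding order_ideal_def by blast
lemma J_mult: "s \<in> J \<Longrightarrow> t \<in> J \<Longrightarrow> s \<otimes>\<^bsub>N\<^esub> t \<in> J"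
  using oJ Jc unfolding order_ideal_def by blast
lemma I_dec: "x \<in> carrier M \<Longrightarrow> y \<in> carrier M \<Longrightarrow> x \<otimes>\<^bsub>M\<^esub> y \<in> I \<Longrightarrow> x \<in> I \<and> y \<in> I"
  using oI unfolding order_ideal_def by blast
lemma J_dec: "x \<in> carrier N \<Longrightarrow> y \<in> carrier N \<Longrightarrow> x \<otimes>\<^bsub>N\<^esub> y \<in> J \<Longrightarrow> x \<in> J \<and> y \<in> J"
  using oJ unfolding order_ideal_def by blast

lemma phi_mult: "s \<in> I \<Longrightarrow> t \<in> I \<Longrightarrow> \<phi> (s \<otimes>\<^bsub>M\<^esub> t) = \<phi> s \<otimes>\<^bsub>N\<^esub> \<phi> t"
  using isophi unfolding iso_def hom_def by auto
lemma phi_inj: "inj_on \<phi> I"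
  using isophi unfolding iso_def bij_betw_def by auto

lemma one_I: "\<one>\<^bsub>M\<^esub> \<in> I" using ideal_one[OF M.monoid_axioms oI] .
lemma one_J: "\<one>\<^bsub>N\<^esub> \<in> J" using ideal_one[OF N.monoid_axioms oJ] .

lemma phi_one: "\<phi> \<one>\<^bsub>M\<^esub> = \<one>\<^bsub>N\<^esub>"
proof -
  obtain t where t: "t \<in> I" "\<phi> t = \<one>\<^bsub>N\<^esub>" using one_J by auto
  have "\<phi> t = \<phi> (\<one>\<^bsub>M\<^esub> \<otimes>\<^bsub>M\<^esub> t)" using t Ic by auto
  also have "\<dots> = \<phi> \<one>\<^bsub>M\<^esub>" using phi_mult[OF one_I t(1)] t Jc one_I by auto
  finally show ?thesis using t by simp
qed

lemma cMN: "comm_monoid (M \<times>\<times> N)"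
  unfolding comm_monoid_def comm_monoid_axioms_def
  using DirProd_monoid[OF M.monoid_axioms N.monoid_axioms]
  by (auto simp: M.m_comm N.m_comm)

lemma Sc: "S \<subseteq> carrier (M \<times>\<times> N) \<times> carrier (M \<times>\<times> N)"
  using Ic Jc by auto

lemma Rcong: "monoid_congruence (M \<times>\<times> N) R"
  and SR: "S \<subseteq> R"
  and Rmin: "monoid_congruence (M \<times>\<times> N) R' \<Longrightarrow> S \<subseteq> R' \<Longrightarrow> R \<subseteq> R'"
  unfolding pushout_congruence_def
  using gen_cong[OF comm_monoid.axioms(1)[OF cMN] Sc] by auto

lemma Req: "equiv (carrier M \<times> carrier N) R"
  using Rcong unfolding monoid_congruence_def by simp

lemma cP: "comm_monoid P"
  unfolding pushout_monoid_def using quot_comm_monoid[OF cMN Rcong] .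

lemma Pcarrier: "carrier P = (carrier M \<times> carrier N) // R"
  unfolding pushout_monoid_def by (simp add: quot_carrier)

lemma Pmult: "a \<in> carrier M \<Longrightarrow> b \<in> carrier N \<Longrightarrow> c \<in> carrier M \<Longrightarrow> d \<in> carrier N \<Longrightarrow>
  R``{(a,b)} \<otimes>\<^bsub>P\<^esub> R``{(c,d)} = R``{(a \<otimes>\<^bsub>M\<^esub> c, b \<otimes>\<^bsub>N\<^esub> d)}"
  unfolding pushout_monoid_def using quot_mult[OF Rcong, of "(a,b)" "(c,d)"] by simp

lemma Rcl: "(p, q) \<in> R \<Longrightarrow> R``{p} = R``{q}"
  using equiv_class_eq[OF Req] .
lemma Rcl_iff: "p \<in> carrier M \<times> carrier N \<Longrightarrow> q \<in> carrier M \<times> carrier N \<Longrightarrow> R``{p} = R``{q} \<longleftrightarrow> (p, q) \<in> R"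
  using eq_equiv_class_iff[OF Req] by blast
lemma Rin: "p \<in> carrier M \<times> carrier N \<Longrightarrow> R``{p} \<in> carrier P"
  by (simp add: Pcarrier quotientI)
lemma Pcases:
  assumes "A \<in> carrier P"
  obtains a b where "A = R``{(a,b)}" "a \<in> carrier M" "b \<in> carrier N"
  using assms unfolding Pcarrier by (auto elim!: quotientE)

lemma Rstep:
  assumes "s \<in> I" "m \<in> carrier M" "n \<in> carrier N"
  shows "((m \<otimes>\<^bsub>M\<^esub> s, n), (m, \<phi> s \<otimes>\<^bsub>N\<^esub> n)) \<in> R"
proof -
  have sc: "s \<in> carrier M" "\<phi> s \<in> carrier N" using assms Ic Jc by auto
  have "((m, n), (m, n)) \<in> R" using Req assms unfolding equiv_def refl_on_def by auto
  moreover have "((s, \<one>\<^bsub>N\<^esub>), (\<one>\<^bsub>M\<^esub>, \<phi> s)) \<in> R" using SR assms by blast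
  ultimately have "((m, n) \<otimes>\<^bsub>M \<times>\<times> N\<^esub> (s, \<one>\<^bsub>N\<^esub>), (m, n) \<otimes>\<^bsub>M \<times>\<times> N\<^esub> (\<one>\<^bsub>M\<^esub>, \<phi> s)) \<in> R"
    using Rcong unfolding monoid_congruence_def by blast
  then show ?thesis using sc assms by (simp add: N.m_comm)
qed

lemma iota1_eq: "iota1 M N I \<phi> x = R``{(x, \<one>\<^bsub>N\<^esub>)}" by (simp add: iota1_def)
lemma iota2_eq: "iota2 M N I \<phi> y = R``{(\<one>\<^bsub>M\<^esub>, y)}" by (simp add: iota2_def)

lemma iota1_hom: "iota1 M N I \<phi> \<in> hom M P"
  by (rule homI) (simp_all add: iota1_eq Rin Pmult)
lemma iota2_hom: "iota2 M N I \<phi> \<in> hom N P"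
  by (rule homI) (simp_all add: iota2_eq Rin Pmult)

lemma iota12: "s \<in> I \<Longrightarrow> iota1 M N I \<phi> s = iota2 M N I \<phi> (\<phi> s)"
  unfolding iota1_eq iota2_eq by (rule Rcl) (use SR in blast)

lemma univ:
  fixes T :: "'c monoid"
  assumes cT: "comm_monoid T" and f: "f \<in> hom M T" and g: "g \<in> hom N T"
    and fg: "\<forall>s\<in>I. f s = g (\<phi> s)"
  defines "h \<equiv> \<lambda>A. (\<lambda>p. f (fst p) \<otimes>\<^bsub>T\<^esub> g (snd p)) (SOME p. p \<in> A)"
  shows "h \<in> hom P T" "\<And>a b. a \<in> carrier M \<Longrightarrow> b \<in> carrier N \<Longrightarrow> h (R``{(a,b)}) = f a \<otimes>\<^bsub>T\<^esub> g b"
    "\<forall>x\<in>carrier M. h (iota1 M N I \<phi> x) = f x" "\<forall>y\<in>carrier N. h (iota2 M N I \<phi> y) = g y"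
    "\<forall>h'\<in>hom P T. (\<forall>x\<in>carrier M. h' (iota1 M N I \<phi> x) = f x) \<and> (\<forall>y\<in>carrier N. h' (iota2 M N I \<phi> y) = g y)
               \<longrightarrow> (\<forall>p\<in>carrier P. h' p = h p)"
proof -
  interpret T: comm_monoid T by fact
  define F where "F = (\<lambda>p. f (fst p) \<otimes>\<^bsub>T\<^esub> g (snd p))"
  have fc: "\<And>x. x \<in> carrier M \<Longrightarrow> f x \<in> carrier T" using f by (simp add: hom_in_carrier)
  have gc: "\<And>x. x \<in> carrier N \<Longrightarrow> g x \<in> carrier T" using g by (simp add: hom_in_carrier)
  have fm: "\<And>x y. x \<in> carrier M \<Longrightarrow> y \<in> carrier M \<Longrightarrow> f (x \<otimes>\<^bsub>M\<^esub> y) = f x \<otimes>\<^bsub>T\<^esub> f y"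
    using f by (simp add: hom_mult)
  have gm: "\<And>x y. x \<in> carrier N \<Longrightarrow> y \<in> carrier N \<Longrightarrow> g (x \<otimes>\<^bsub>N\<^esub> y) = g x \<otimes>\<^bsub>T\<^esub> g y"
    using g by (simp add: hom_mult)
  have f1: "f \<one>\<^bsub>M\<^esub> = g \<one>\<^bsub>N\<^esub>" using fg one_I phi_one by metis
  have Fx1: "\<And>x. x \<in> carrier M \<Longrightarrow> F (x, \<one>\<^bsub>N\<^esub>) = f x"
  proof -
    fix x assume x: "x \<in> carrier M"
    have "F (x, \<one>\<^bsub>N\<^esub>) = f x \<otimes>\<^bsub>T\<^esub> f \<one>\<^bsub>M\<^esub>" using f1 by (simp add: F_def)
    also have "\<dots> = f x" using fm[OF x M.one_closed] x by simp
    finally show "F (x, \<one>\<^bsub>N\<^esub>) = f x" .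
  qed
  have F1y: "\<And>y. y \<in> carrier N \<Longrightarrow> F (\<one>\<^bsub>M\<^esub>, y) = g y"
  proof -
    fix y assume y: "y \<in> carrier N"
    have "F (\<one>\<^bsub>M\<^esub>, y) = g \<one>\<^bsub>N\<^esub> \<otimes>\<^bsub>T\<^esub> g y" using f1 by (simp add: F_def)
    also have "\<dots> = g y" using gm[OF N.one_closed y] y by simp
    finally show "F (\<one>\<^bsub>M\<^esub>, y) = g y" .
  qed
  have Fm: "\<And>p q. p \<in> carrier (M \<times>\<times> N) \<Longrightarrow> q \<in> carrier (M \<times>\<times> N) \<Longrightarrow>
      F (p \<otimes>\<^bsub>M \<times>\<times> N\<^esub> q) = F p \<otimes>\<^bsub>T\<^esub> F q"
  proof -
    fix p q assume "p \<in> carrier (M \<times>\<times> N)" "q \<in> carrier (M \<times>\<times> N)"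
    then obtain a b c d where pq: "p = (a,b)" "q = (c,d)" "a \<in> carrier M" "b \<in> carrier N"
      "c \<in> carrier M" "d \<in> carrier N" by auto
    then show "F (p \<otimes>\<^bsub>M \<times>\<times> N\<^esub> q) = F p \<otimes>\<^bsub>T\<^esub> F q"
      by (simp add: F_def fm gm fc gc T.m_ac)
  qed
  have K: "monoid_congruence (M \<times>\<times> N) {(p,q). p \<in> carrier (M \<times>\<times> N) \<and> q \<in> carrier (M \<times>\<times> N) \<and> F p = F q}"
    by (rule congI) (auto simp: Fm comm_monoid.axioms(1)[OF cMN] monoid.m_closed)
  have "S \<subseteq> {(p,q). p \<in> carrier (M \<times>\<times> N) \<and> q \<in> carrier (M \<times>\<times> N) \<and> F p = F q}"
  proof (rule subsetI)
    fix z assume "z \<in> S"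
    then obtain s where s: "s \<in> I" "z = ((s, \<one>\<^bsub>N\<^esub>), (\<one>\<^bsub>M\<^esub>, \<phi> s))" by blast
    have sc: "s \<in> carrier M" "\<phi> s \<in> carrier N" using s Ic Jc by auto
    have "F (s, \<one>\<^bsub>N\<^esub>) = F (\<one>\<^bsub>M\<^esub>, \<phi> s)" using Fx1[OF sc(1)] F1y[OF sc(2)] fg s by simp
    then show "z \<in> {(p,q). p \<in> carrier (M \<times>\<times> N) \<and> q \<in> carrier (M \<times>\<times> N) \<and> F p = F q}"
      using s sc by simp
  qed
  then have RK: "R \<subseteq> {(p,q). p \<in> carrier (M \<times>\<times> N) \<and> q \<in> carrier (M \<times>\<times> N) \<and> F p = F q}"
    using Rmin K by blast
  have hR: "\<And>p. p \<in> carrier M \<times> carrier N \<Longrightarrow> h (R``{p}) = F p"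
  proof -
    fix p assume p: "p \<in> carrier M \<times> carrier N"
    have "(p, SOME q. q \<in> R``{p}) \<in> R" using some_class(1)[OF Req p] .
    then show "h (R``{p}) = F p" using RK unfolding h_def F_def by auto
  qed
  show hab: "\<And>a b. a \<in> carrier M \<Longrightarrow> b \<in> carrier N \<Longrightarrow> h (R``{(a,b)}) = f a \<otimes>\<^bsub>T\<^esub> g b"
    using hR by (simp add: F_def)
  show "h \<in> hom P T"
  proof (rule homI)
    fix A assume "A \<in> carrier P"
    then obtain a b where "A = R``{(a,b)}" "a \<in> carrier M" "b \<in> carrier N" by (rule Pcases)
    then show "h A \<in> carrier T" using hab fc gc by simp
  next
    fix A B assume "A \<in> carrier P" "B \<in> carrier P"
    then obtain a b c d where "A = R``{(a,b)}" "a \<in> carrier M" "b \<in> carrier N"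
       "B = R``{(c,d)}" "c \<in> carrier M" "d \<in> carrier N" by (metis Pcases)
    then show "h (A \<otimes>\<^bsub>P\<^esub> B) = h A \<otimes>\<^bsub>T\<^esub> h B"
      using Pmult hR Fm[of "(a,b)" "(c,d)"] by simp
  qed
  show "\<forall>x\<in>carrier M. h (iota1 M N I \<phi> x) = f x" using hR Fx1 by (simp add: iota1_eq)
  show "\<forall>y\<in>carrier N. h (iota2 M N I \<phi> y) = g y" using hR F1y by (simp add: iota2_eq)
  show "\<forall>h'\<in>hom P T. (\<forall>x\<in>carrier M. h' (iota1 M N I \<phi> x) = f x) \<and> (\<forall>y\<in>carrier N. h' (iota2 M N I \<phi> y) = g y)
               \<longrightarrow> (\<forall>p\<in>carrier P. h' p = h p)"
  proof (intro ballI impI)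
    fix h' A assume h': "h' \<in> hom P T" and hh: "(\<forall>x\<in>carrier M. h' (iota1 M N I \<phi> x) = f x) \<and> (\<forall>y\<in>carrier N. h' (iota2 M N I \<phi> y) = g y)"
      and A: "A \<in> carrier P"
    then obtain a b where ab: "A = R``{(a,b)}" "a \<in> carrier M" "b \<in> carrier N" by (metis Pcases)
    have "A = iota1 M N I \<phi> a \<otimes>\<^bsub>P\<^esub> iota2 M N I \<phi> b" using ab by (simp add: iota1_eq iota2_eq Pmult)
    then have "h' A = h' (iota1 M N I \<phi> a) \<otimes>\<^bsub>T\<^esub> h' (iota2 M N I \<phi> b)"
      using h' ab iota1_hom iota2_hom by (simp add: hom_mult hom_in_carrier)
    also have "\<dots> = f a \<otimes>\<^bsub>T\<^esub> g b" using hh ab by simp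
    finally show "h' A = h A" using hab ab by simp
  qed
qed

end


context PO begin

lemma refl_R: "p \<in> carrier M \<times> carrier N \<Longrightarrow> (p,p) \<in> R"
  using Req unfolding equiv_def refl_on_def by blast

lemma mnc: "monoid (M \<times>\<times> N)" using comm_monoid.axioms(1)[OF cMN] .

lemma inj1: "inj_on (iota1 M N I \<phi>) (carrier M)"
proof (rule inj_onI)
  define Q where "Q = (\<lambda>p q. (snd p \<in> J \<and> snd q \<in> J \<and> (\<exists>s\<in>I. \<exists>s'\<in>I. snd p = \<phi> s \<and> snd q = \<phi> s' \<and>
       fst p \<otimes>\<^bsub>M\<^esub> s = fst q \<otimes>\<^bsub>M\<^esub> s')) \<or> (snd p \<notin> J \<and> snd q \<notin> J))"
  have K: "monoid_congruence (M \<times>\<times> N) {(p,q). p \<in> carrier (M \<times>\<times> N) \<and> q \<in> carrier (M \<times>\<times> N) \<and> Q p q}"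
  proof (rule congI)
    show "\<And>x y. x \<in> carrier (M \<times>\<times> N) \<Longrightarrow> y \<in> carrier (M \<times>\<times> N) \<Longrightarrow> x \<otimes>\<^bsub>M \<times>\<times> N\<^esub> y \<in> carrier (M \<times>\<times> N)"
      using mnc by (rule monoid.m_closed)
    show "Q x x" if "x \<in> carrier (M \<times>\<times> N)" for x
      unfolding Q_def by auto
    show "Q y x" if "Q x y" for x y
      using that unfolding Q_def by metis
    show "Q x z" if h: "x \<in> carrier (M \<times>\<times> N)" "y \<in> carrier (M \<times>\<times> N)" "z \<in> carrier (M \<times>\<times> N)" "Q x y" "Q y z" for x y z
    proof (cases "snd x \<in> J")
      case True
      then obtain s s' t t' where st: "s \<in> I" "s' \<in> I" "t \<in> I" "t' \<in> I" "snd x = \<phi> s" "snd y = \<phi> s'"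
        "snd y = \<phi> t" "snd z = \<phi> t'" "fst x \<otimes>\<^bsub>M\<^esub> s = fst y \<otimes>\<^bsub>M\<^esub> s'" "fst y \<otimes>\<^bsub>M\<^esub> t = fst z \<otimes>\<^bsub>M\<^esub> t'"
        using h(4,5) unfolding Q_def by metis
      have "s' = t" using st phi_inj by (metis inj_on_def)
      then show ?thesis using st unfolding Q_def by auto
    next
      case False
      then show ?thesis using h(4,5) unfolding Q_def by auto
    qed
    show "Q (a \<otimes>\<^bsub>M \<times>\<times> N\<^esub> c) (b \<otimes>\<^bsub>M \<times>\<times> N\<^esub> d)"
      if h: "a \<in> carrier (M \<times>\<times> N)" "b \<in> carrier (M \<times>\<times> N)" "c \<in> carrier (M \<times>\<times> N)" "d \<in> carrier (M \<times>\<times> N)"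
        "Q a b" "Q c d" for a b c d
    proof -
      obtain a1 a2 b1 b2 c1 c2 d1 d2 where e: "a = (a1,a2)" "b = (b1,b2)" "c = (c1,c2)" "d = (d1,d2)"
        by (metis surj_pair)
      have cc: "a1 \<in> carrier M" "a2 \<in> carrier N" "b1 \<in> carrier M" "b2 \<in> carrier N"
        "c1 \<in> carrier M" "c2 \<in> carrier N" "d1 \<in> carrier M" "d2 \<in> carrier N" using h e by auto
      show ?thesis
      proof (cases "a2 \<in> J \<and> c2 \<in> J")
        case True
        then obtain s s' t t' where st: "s \<in> I" "s' \<in> I" "t \<in> I" "t' \<in> I" "a2 = \<phi> s" "b2 = \<phi> s'"
          "c2 = \<phi> t" "d2 = \<phi> t'" "a1 \<otimes>\<^bsub>M\<^esub> s = b1 \<otimes>\<^bsub>M\<^esub> s'" "c1 \<otimes>\<^bsub>M\<^esub> t = d1 \<otimes>\<^bsub>M\<^esub> t'"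
          using h(5,6) e unfolding Q_def by auto
        have sc: "s \<in> carrier M" "s' \<in> carrier M" "t \<in> carrier M" "t' \<in> carrier M" using st Ic by auto
        have "(a1 \<otimes>\<^bsub>M\<^esub> c1) \<otimes>\<^bsub>M\<^esub> (s \<otimes>\<^bsub>M\<^esub> t) = (a1 \<otimes>\<^bsub>M\<^esub> s) \<otimes>\<^bsub>M\<^esub> (c1 \<otimes>\<^bsub>M\<^esub> t)"
          using sc cc by (simp add: M.m_ac)
        also have "\<dots> = (b1 \<otimes>\<^bsub>M\<^esub> s') \<otimes>\<^bsub>M\<^esub> (d1 \<otimes>\<^bsub>M\<^esub> t')" using st by simp
        also have "\<dots> = (b1 \<otimes>\<^bsub>M\<^esub> d1) \<otimes>\<^bsub>M\<^esub> (s' \<otimes>\<^bsub>M\<^esub> t')"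
          using sc cc by (simp add: M.m_ac)
        finally have eq: "(a1 \<otimes>\<^bsub>M\<^esub> c1) \<otimes>\<^bsub>M\<^esub> (s \<otimes>\<^bsub>M\<^esub> t) = (b1 \<otimes>\<^bsub>M\<^esub> d1) \<otimes>\<^bsub>M\<^esub> (s' \<otimes>\<^bsub>M\<^esub> t')" .
        have "a2 \<otimes>\<^bsub>N\<^esub> c2 = \<phi> (s \<otimes>\<^bsub>M\<^esub> t)" "b2 \<otimes>\<^bsub>N\<^esub> d2 = \<phi> (s' \<otimes>\<^bsub>M\<^esub> t')"
          using st phi_mult by auto
        moreover have "s \<otimes>\<^bsub>M\<^esub> t \<in> I" "s' \<otimes>\<^bsub>M\<^esub> t' \<in> I" using st I_mult by auto
        ultimately show ?thesis using eq e unfolding Q_def by auto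
      next
        case False
        then have "a2 \<otimes>\<^bsub>N\<^esub> c2 \<notin> J" using J_dec cc by blast
        moreover have "b2 \<notin> J \<or> d2 \<notin> J" using False h(5,6) e unfolding Q_def by auto
        then have "b2 \<otimes>\<^bsub>N\<^esub> d2 \<notin> J" using J_dec cc by blast
        ultimately show ?thesis using e unfolding Q_def by auto
      qed
    qed
  qed
  have "S \<subseteq> {(p,q). p \<in> carrier (M \<times>\<times> N) \<and> q \<in> carrier (M \<times>\<times> N) \<and> Q p q}"
  proof (rule subsetI)
    fix z assume "z \<in> S"
    then obtain s where s: "s \<in> I" "z = ((s, \<one>\<^bsub>N\<^esub>), (\<one>\<^bsub>M\<^esub>, \<phi> s))" by blast
    have sc: "s \<in> carrier M" "\<phi> s \<in> carrier N" using s Ic Jc by auto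
    have w: "\<exists>a\<in>I. \<exists>b\<in>I. \<one>\<^bsub>N\<^esub> = \<phi> a \<and> \<phi> s = \<phi> b \<and> s \<otimes>\<^bsub>M\<^esub> a = \<one>\<^bsub>M\<^esub> \<otimes>\<^bsub>M\<^esub> b"
      by (rule bexI[of _ "\<one>\<^bsub>M\<^esub>"], rule bexI[of _ s]) (use s sc one_I phi_one in auto)
    have "Q (s, \<one>\<^bsub>N\<^esub>) (\<one>\<^bsub>M\<^esub>, \<phi> s)" unfolding Q_def using w s one_J by auto
    then show "z \<in> {(p,q). p \<in> carrier (M \<times>\<times> N) \<and> q \<in> carrier (M \<times>\<times> N) \<and> Q p q}"
      using s sc by simp
  qed
  then have RK: "R \<subseteq> {(p,q). p \<in> carrier (M \<times>\<times> N) \<and> q \<in> carrier (M \<times>\<times> N) \<and> Q p q}"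
    using Rmin K by blast
  fix x y assume xy: "x \<in> carrier M" "y \<in> carrier M" "iota1 M N I \<phi> x = iota1 M N I \<phi> y"
  then have "((x, \<one>\<^bsub>N\<^esub>), (y, \<one>\<^bsub>N\<^esub>)) \<in> R" using Rcl_iff by (simp add: iota1_eq)
  then have "Q (x, \<one>\<^bsub>N\<^esub>) (y, \<one>\<^bsub>N\<^esub>)" using RK by blast
  then obtain s s' where ss: "s \<in> I" "s' \<in> I" "\<one>\<^bsub>N\<^esub> = \<phi> s" "\<one>\<^bsub>N\<^esub> = \<phi> s'" "x \<otimes>\<^bsub>M\<^esub> s = y \<otimes>\<^bsub>M\<^esub> s'"
    unfolding Q_def using one_J by auto
  have "s = \<one>\<^bsub>M\<^esub>" "s' = \<one>\<^bsub>M\<^esub>" using ss phi_inj phi_one one_I by (metis inj_on_def)+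
  then show "x = y" using ss xy by simp
qed

lemma inj2: "inj_on (iota2 M N I \<phi>) (carrier N)"
proof (rule inj_onI)
  define Q where "Q = (\<lambda>p q. (fst p \<in> I \<and> fst q \<in> I \<and> \<phi> (fst p) \<otimes>\<^bsub>N\<^esub> snd p = \<phi> (fst q) \<otimes>\<^bsub>N\<^esub> snd q)
      \<or> (fst p \<notin> I \<and> fst q \<notin> I))"
  have K: "monoid_congruence (M \<times>\<times> N) {(p,q). p \<in> carrier (M \<times>\<times> N) \<and> q \<in> carrier (M \<times>\<times> N) \<and> Q p q}"
  proof (rule congI)
    show "\<And>x y. x \<in> carrier (M \<times>\<times> N) \<Longrightarrow> y \<in> carrier (M \<times>\<times> N) \<Longrightarrow> x \<otimes>\<^bsub>M \<times>\<times> N\<^esub> y \<in> carrier (M \<times>\<times> N)"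
      using mnc by (rule monoid.m_closed)
    show "Q x x" if "x \<in> carrier (M \<times>\<times> N)" for x
      unfolding Q_def by auto
    show "Q y x" if "Q x y" for x y
      using that unfolding Q_def by metis
    show "Q x z" if h: "x \<in> carrier (M \<times>\<times> N)" "y \<in> carrier (M \<times>\<times> N)" "z \<in> carrier (M \<times>\<times> N)" "Q x y" "Q y z" for x y z
      using h(4,5) unfolding Q_def by auto
    show "Q (a \<otimes>\<^bsub>M \<times>\<times> N\<^esub> c) (b \<otimes>\<^bsub>M \<times>\<times> N\<^esub> d)"
      if h: "a \<in> carrier (M \<times>\<times> N)" "b \<in> carrier (M \<times>\<times> N)" "c \<in> carrier (M \<times>\<times> N)" "d \<in> carrier (M \<times>\<times> N)"
        "Q a b" "Q c d" for a b c d
    proof -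
      obtain a1 a2 b1 b2 c1 c2 d1 d2 where e: "a = (a1,a2)" "b = (b1,b2)" "c = (c1,c2)" "d = (d1,d2)"
        by (metis surj_pair)
      have cc: "a1 \<in> carrier M" "a2 \<in> carrier N" "b1 \<in> carrier M" "b2 \<in> carrier N"
        "c1 \<in> carrier M" "c2 \<in> carrier N" "d1 \<in> carrier M" "d2 \<in> carrier N" using h e by auto
      show ?thesis
      proof (cases "a1 \<in> I \<and> c1 \<in> I")
        case True
        then have st: "a1 \<in> I" "b1 \<in> I" "c1 \<in> I" "d1 \<in> I" "\<phi> a1 \<otimes>\<^bsub>N\<^esub> a2 = \<phi> b1 \<otimes>\<^bsub>N\<^esub> b2"
          "\<phi> c1 \<otimes>\<^bsub>N\<^esub> c2 = \<phi> d1 \<otimes>\<^bsub>N\<^esub> d2"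
          using h(5,6) e unfolding Q_def by auto
        have sc: "\<phi> a1 \<in> carrier N" "\<phi> b1 \<in> carrier N" "\<phi> c1 \<in> carrier N" "\<phi> d1 \<in> carrier N" using st Jc by auto
        have "\<phi> (a1 \<otimes>\<^bsub>M\<^esub> c1) \<otimes>\<^bsub>N\<^esub> (a2 \<otimes>\<^bsub>N\<^esub> c2) = (\<phi> a1 \<otimes>\<^bsub>N\<^esub> a2) \<otimes>\<^bsub>N\<^esub> (\<phi> c1 \<otimes>\<^bsub>N\<^esub> c2)"
          using sc cc st(1-4) by (simp add: phi_mult N.m_ac)
        also have "\<dots> = (\<phi> b1 \<otimes>\<^bsub>N\<^esub> b2) \<otimes>\<^bsub>N\<^esub> (\<phi> d1 \<otimes>\<^bsub>N\<^esub> d2)" using st by simp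
        also have "\<dots> = \<phi> (b1 \<otimes>\<^bsub>M\<^esub> d1) \<otimes>\<^bsub>N\<^esub> (b2 \<otimes>\<^bsub>N\<^esub> d2)"
          using sc cc st(1-4) by (simp add: phi_mult N.m_ac)
        finally show ?thesis using e st I_mult unfolding Q_def by auto
      next
        case False
        then have "a1 \<otimes>\<^bsub>M\<^esub> c1 \<notin> I" using I_dec cc by blast
        moreover have "b1 \<notin> I \<or> d1 \<notin> I" using False h(5,6) e unfolding Q_def by auto
        then have "b1 \<otimes>\<^bsub>M\<^esub> d1 \<notin> I" using I_dec cc by blast
        ultimately show ?thesis using e unfolding Q_def by auto
      qed
    qed
  qed
  have "S \<subseteq> {(p,q). p \<in> carrier (M \<times>\<times> N) \<and> q \<in> carrier (M \<times>\<times> N) \<and> Q p q}"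
  proof (rule subsetI)
    fix z assume "z \<in> S"
    then obtain s where s: "s \<in> I" "z = ((s, \<one>\<^bsub>N\<^esub>), (\<one>\<^bsub>M\<^esub>, \<phi> s))" by blast
    have sc: "s \<in> carrier M" "\<phi> s \<in> carrier N" using s Ic Jc by auto
    have "Q (s, \<one>\<^bsub>N\<^esub>) (\<one>\<^bsub>M\<^esub>, \<phi> s)" unfolding Q_def using s sc one_I phi_one by simp
    then show "z \<in> {(p,q). p \<in> carrier (M \<times>\<times> N) \<and> q \<in> carrier (M \<times>\<times> N) \<and> Q p q}"
      using s sc by simp
  qed
  then have RK: "R \<subseteq> {(p,q). p \<in> carrier (M \<times>\<times> N) \<and> q \<in> carrier (M \<times>\<times> N) \<and> Q p q}"
    using Rmin K by blast
  fix x y assume xy: "x \<in> carrier N" "y \<in> carrier N" "iota2 M N I \<phi> x = iota2 M N I \<phi> y"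
  then have "((\<one>\<^bsub>M\<^esub>, x), (\<one>\<^bsub>M\<^esub>, y)) \<in> R" using Rcl_iff by (simp add: iota2_eq)
  then have "Q (\<one>\<^bsub>M\<^esub>, x) (\<one>\<^bsub>M\<^esub>, y)" using RK by blast
  then show "x = y" unfolding Q_def using one_I phi_one xy by simp
qed

lemma inI':
  assumes "a \<in> carrier M" "b \<in> carrier N"
  shows "R``{(a,b)} \<in> iota1 M N I \<phi> ` I \<longleftrightarrow> a \<in> I \<and> b \<in> J"
proof
  define Q where "Q = (\<lambda>p q. (fst p \<in> I \<and> snd p \<in> J) = (fst q \<in> I \<and> snd q \<in> J))"
  have K: "monoid_congruence (M \<times>\<times> N) {(p,q). p \<in> carrier (M \<times>\<times> N) \<and> q \<in> carrier (M \<times>\<times> N) \<and> Q p q}"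
  proof (rule congI)
    show "\<And>x y. x \<in> carrier (M \<times>\<times> N) \<Longrightarrow> y \<in> carrier (M \<times>\<times> N) \<Longrightarrow> x \<otimes>\<^bsub>M \<times>\<times> N\<^esub> y \<in> carrier (M \<times>\<times> N)"
      using mnc by (rule monoid.m_closed)
    show "Q (a \<otimes>\<^bsub>M \<times>\<times> N\<^esub> c) (b \<otimes>\<^bsub>M \<times>\<times> N\<^esub> d)"
      if h: "a \<in> carrier (M \<times>\<times> N)" "b \<in> carrier (M \<times>\<times> N)" "c \<in> carrier (M \<times>\<times> N)" "d \<in> carrier (M \<times>\<times> N)"
        "Q a b" "Q c d" for a b c d
    proof -
      have key: "\<And>p q. p \<in> carrier (M \<times>\<times> N) \<Longrightarrow> q \<in> carrier (M \<times>\<times> N) \<Longrightarrow>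
        (fst (p \<otimes>\<^bsub>M \<times>\<times> N\<^esub> q) \<in> I \<and> snd (p \<otimes>\<^bsub>M \<times>\<times> N\<^esub> q) \<in> J) =
        ((fst p \<in> I \<and> snd p \<in> J) \<and> (fst q \<in> I \<and> snd q \<in> J))"
      proof -
        fix p q assume pq: "p \<in> carrier (M \<times>\<times> N)" "q \<in> carrier (M \<times>\<times> N)"
        obtain p1 p2 q1 q2 where e: "p = (p1,p2)" "q = (q1,q2)" by (metis surj_pair)
        have cc: "p1 \<in> carrier M" "p2 \<in> carrier N" "q1 \<in> carrier M" "q2 \<in> carrier N" using pq e by auto
        have 1: "p1 \<otimes>\<^bsub>M\<^esub> q1 \<in> I \<longleftrightarrow> p1 \<in> I \<and> q1 \<in> I" using I_dec I_mult cc by blast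
        have 2: "p2 \<otimes>\<^bsub>N\<^esub> q2 \<in> J \<longleftrightarrow> p2 \<in> J \<and> q2 \<in> J" using J_dec J_mult cc by blast
        show "(fst (p \<otimes>\<^bsub>M \<times>\<times> N\<^esub> q) \<in> I \<and> snd (p \<otimes>\<^bsub>M \<times>\<times> N\<^esub> q) \<in> J) =
          ((fst p \<in> I \<and> snd p \<in> J) \<and> (fst q \<in> I \<and> snd q \<in> J))"
          using 1 2 e by auto
      qed
      show ?thesis using key[OF h(1,3)] key[OF h(2,4)] h(5,6) unfolding Q_def by blast
    qed
  qed (auto simp: Q_def)
  have "S \<subseteq> {(p,q). p \<in> carrier (M \<times>\<times> N) \<and> q \<in> carrier (M \<times>\<times> N) \<and> Q p q}"
    using Sc one_I one_J unfolding Q_def by auto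
  then have RK: "R \<subseteq> {(p,q). p \<in> carrier (M \<times>\<times> N) \<and> q \<in> carrier (M \<times>\<times> N) \<and> Q p q}"
    using Rmin K by blast
  assume "R``{(a,b)} \<in> iota1 M N I \<phi> ` I"
  then obtain s where s: "s \<in> I" "R``{(a,b)} = R``{(s, \<one>\<^bsub>N\<^esub>)}" by (auto simp: iota1_eq)
  then have "((a,b),(s, \<one>\<^bsub>N\<^esub>)) \<in> R" using Rcl_iff assms Ic by auto
  then show "a \<in> I \<and> b \<in> J" using RK s one_J unfolding Q_def by auto
next
  assume ab: "a \<in> I \<and> b \<in> J"
  then obtain t where t: "t \<in> I" "b = \<phi> t" by auto
  have "((a \<otimes>\<^bsub>M\<^esub> t, \<one>\<^bsub>N\<^esub>), (a, \<phi> t \<otimes>\<^bsub>N\<^esub> \<one>\<^bsub>N\<^esub>)) \<in> R" using Rstep[OF t(1) assms(1) N.one_closed] .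
  moreover have "\<phi> t \<otimes>\<^bsub>N\<^esub> \<one>\<^bsub>N\<^esub> = \<phi> t" using t Jc by auto
  ultimately have "R``{(a,b)} = iota1 M N I \<phi> (a \<otimes>\<^bsub>M\<^esub> t)" using t by (simp add: iota1_eq Rcl)
  then show "R``{(a,b)} \<in> iota1 M N I \<phi> ` I" using ab t I_mult by auto
qed

end


lemma icI: "x \<in> carrier G \<Longrightarrow> y \<in> carrier G \<Longrightarrow> u \<in> I \<Longrightarrow> v \<in> I \<Longrightarrow> x \<otimes>\<^bsub>G\<^esub> u = y \<otimes>\<^bsub>G\<^esub> v
  \<Longrightarrow> (x, y) \<in> ideal_congruence G I"
  unfolding ideal_congruence_def by blast

context PO begin

abbreviation "I' \<equiv> iota1 M N I \<phi> ` I"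
abbreviation "EM \<equiv> ideal_congruence M I"
abbreviation "EN \<equiv> ideal_congruence N J"
abbreviation "E \<equiv> ideal_congruence P I'"

lemma I'c: "I' \<subseteq> carrier P"
  using iota1_hom Ic by (auto simp: hom_in_carrier)

lemma oI': "order_ideal P I'"
  unfolding order_ideal_def
proof (intro conjI ballI)
  show "I' \<subseteq> carrier P" by (rule I'c)
  show "I' \<noteq> {}" using one_I by auto
  fix A B assume A: "A \<in> carrier P" and B: "B \<in> carrier P"
  obtain a b where ab: "A = R``{(a,b)}" "a \<in> carrier M" "b \<in> carrier N" using A by (rule Pcases)
  obtain c d where cd: "B = R``{(c,d)}" "c \<in> carrier M" "d \<in> carrier N" using B by (rule Pcases)
  have "A \<otimes>\<^bsub>P\<^esub> B = R``{(a \<otimes>\<^bsub>M\<^esub> c, b \<otimes>\<^bsub>N\<^esub> d)}" using ab cd Pmult by simp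
  then have "A \<otimes>\<^bsub>P\<^esub> B \<in> I' \<longleftrightarrow> a \<otimes>\<^bsub>M\<^esub> c \<in> I \<and> b \<otimes>\<^bsub>N\<^esub> d \<in> J"
    using inI' ab cd by simp
  also have "\<dots> \<longleftrightarrow> (a \<in> I \<and> b \<in> J) \<and> (c \<in> I \<and> d \<in> J)"
  proof -
    have "a \<otimes>\<^bsub>M\<^esub> c \<in> I \<longleftrightarrow> a \<in> I \<and> c \<in> I" using I_dec[OF ab(2) cd(2)] I_mult by blast
    moreover have "b \<otimes>\<^bsub>N\<^esub> d \<in> J \<longleftrightarrow> b \<in> J \<and> d \<in> J" using J_dec[OF ab(3) cd(3)] J_mult by blast
    ultimately show ?thesis by blast
  qed
  also have "\<dots> \<longleftrightarrow> A \<in> I' \<and> B \<in> I'" using inI' ab cd by simp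
  finally show "A \<otimes>\<^bsub>P\<^esub> B \<in> I' \<longleftrightarrow> A \<in> I' \<and> B \<in> I'" .
qed

lemma EMc: "monoid_congruence M EM" using ideal_cong[OF cM oI] .
lemma ENc: "monoid_congruence N EN" using ideal_cong[OF cN oJ] .
lemma Ec: "monoid_congruence P E" using ideal_cong[OF cP oI'] .
lemma EMeq: "equiv (carrier M) EM" using EMc unfolding monoid_congruence_def by blast
lemma ENeq: "equiv (carrier N) EN" using ENc unfolding monoid_congruence_def by blast
lemma Eeq: "equiv (carrier P) E" using Ec unfolding monoid_congruence_def by blast

lemma R_EM:
  assumes "(p, q) \<in> R"
  shows "(fst p, fst q) \<in> EM \<and> (snd p, snd q) \<in> EN"
proof -
  define Q where "Q = (\<lambda>p q. (fst p, fst q) \<in> EM \<and> (snd p, snd q) \<in> EN)"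
  have K: "monoid_congruence (M \<times>\<times> N) {(p,q). p \<in> carrier (M \<times>\<times> N) \<and> q \<in> carrier (M \<times>\<times> N) \<and> Q p q}"
  proof (rule congI)
    show "\<And>x y. x \<in> carrier (M \<times>\<times> N) \<Longrightarrow> y \<in> carrier (M \<times>\<times> N) \<Longrightarrow> x \<otimes>\<^bsub>M \<times>\<times> N\<^esub> y \<in> carrier (M \<times>\<times> N)"
      using mnc by (rule monoid.m_closed)
    show "Q x x" if "x \<in> carrier (M \<times>\<times> N)" for x
      using that EMeq ENeq unfolding Q_def equiv_def refl_on_def by auto
    show "Q y x" if "Q x y" for x y
      using that EMeq ENeq unfolding Q_def equiv_def by (auto elim: symE)
    show "Q x z" if h: "x \<in> carrier (M \<times>\<times> N)" "y \<in> carrier (M \<times>\<times> N)" "z \<in> carrier (M \<times>\<times> N)" "Q x y" "Q y z" for x y z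
      using h(4,5) EMeq ENeq unfolding Q_def equiv_def by (auto elim: transE)
    show "Q (a \<otimes>\<^bsub>M \<times>\<times> N\<^esub> c) (b \<otimes>\<^bsub>M \<times>\<times> N\<^esub> d)"
      if h: "a \<in> carrier (M \<times>\<times> N)" "b \<in> carrier (M \<times>\<times> N)" "c \<in> carrier (M \<times>\<times> N)" "d \<in> carrier (M \<times>\<times> N)"
        "Q a b" "Q c d" for a b c d
      using h(5,6) EMc ENc unfolding Q_def monoid_congruence_def by (simp add: mult_DirProd')
  qed
  have "S \<subseteq> {(p,q). p \<in> carrier (M \<times>\<times> N) \<and> q \<in> carrier (M \<times>\<times> N) \<and> Q p q}"
  proof (rule subsetI)
    fix z assume "z \<in> S"
    then obtain s where s: "s \<in> I" "z = ((s, \<one>\<^bsub>N\<^esub>), (\<one>\<^bsub>M\<^esub>, \<phi> s))" by blast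
    have sc: "s \<in> carrier M" "\<phi> s \<in> carrier N" using s Ic Jc by auto
    have "(s, \<one>\<^bsub>M\<^esub>) \<in> EM" by (rule icI[of _ _ _ "\<one>\<^bsub>M\<^esub>" _ s]) (use sc s one_I in auto)
    moreover have "(\<one>\<^bsub>N\<^esub>, \<phi> s) \<in> EN" by (rule icI[of _ _ _ "\<phi> s" _ "\<one>\<^bsub>N\<^esub>"]) (use sc s one_J in auto)
    ultimately show "z \<in> {(p,q). p \<in> carrier (M \<times>\<times> N) \<and> q \<in> carrier (M \<times>\<times> N) \<and> Q p q}"
      using s sc unfolding Q_def by simp
  qed
  then have RK: "R \<subseteq> {(p,q). p \<in> carrier (M \<times>\<times> N) \<and> q \<in> carrier (M \<times>\<times> N) \<and> Q p q}"
    using Rmin K by blast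
  then show ?thesis using assms unfolding Q_def by blast
qed

lemma E_to:
  assumes ab: "a \<in> carrier M" "b \<in> carrier N" "a' \<in> carrier M" "b' \<in> carrier N"
    and E: "(R``{(a,b)}, R``{(a',b')}) \<in> E"
  shows "(a, a') \<in> EM \<and> (b, b') \<in> EN"
proof -
  obtain U V where UV: "U \<in> I'" "V \<in> I'" "R``{(a,b)} \<otimes>\<^bsub>P\<^esub> U = R``{(a',b')} \<otimes>\<^bsub>P\<^esub> V"
    using E unfolding ideal_congruence_def by blast
  then obtain u v where uv: "u \<in> I" "v \<in> I" "U = R``{(u, \<one>\<^bsub>N\<^esub>)}" "V = R``{(v, \<one>\<^bsub>N\<^esub>)}"
    by (auto simp: iota1_eq)
  have uc: "u \<in> carrier M" "v \<in> carrier M" using uv Ic by auto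
  have "R``{(a \<otimes>\<^bsub>M\<^esub> u, b)} = R``{(a' \<otimes>\<^bsub>M\<^esub> v, b')}"
    using UV(3) uv uc ab Pmult by simp
  then have "((a \<otimes>\<^bsub>M\<^esub> u, b), (a' \<otimes>\<^bsub>M\<^esub> v, b')) \<in> R" using Rcl_iff ab uc by simp
  then have 1: "(a \<otimes>\<^bsub>M\<^esub> u, a' \<otimes>\<^bsub>M\<^esub> v) \<in> EM" and 2: "(b, b') \<in> EN" using R_EM by auto
  have 3: "(a, a \<otimes>\<^bsub>M\<^esub> u) \<in> EM" by (rule icI[of _ _ _ u _ "\<one>\<^bsub>M\<^esub>"]) (use ab uc uv one_I in auto)
  have 4: "(a', a' \<otimes>\<^bsub>M\<^esub> v) \<in> EM" by (rule icI[of _ _ _ v _ "\<one>\<^bsub>M\<^esub>"]) (use ab uc uv one_I in auto)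
  have "(a, a') \<in> EM" using 1 3 4 EMeq unfolding equiv_def by (meson symE transE)
  then show ?thesis using 2 by simp
qed

lemma E_from:
  assumes ab: "a \<in> carrier M" "b \<in> carrier N" "a' \<in> carrier M" "b' \<in> carrier N"
    and EM: "(a, a') \<in> EM" and EN: "(b, b') \<in> EN"
  shows "(R``{(a,b)}, R``{(a',b')}) \<in> E"
proof -
  obtain u v where uv: "u \<in> I" "v \<in> I" "a \<otimes>\<^bsub>M\<^esub> u = a' \<otimes>\<^bsub>M\<^esub> v"
    using EM unfolding ideal_congruence_def by blast
  obtain t t' where tt: "t \<in> I" "t' \<in> I" "b \<otimes>\<^bsub>N\<^esub> \<phi> t = b' \<otimes>\<^bsub>N\<^esub> \<phi> t'"
    using EN unfolding ideal_congruence_def by blast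
  have c: "u \<in> carrier M" "v \<in> carrier M" "t \<in> carrier M" "t' \<in> carrier M" "\<phi> t \<in> carrier N" "\<phi> t' \<in> carrier N"
    using uv tt Ic Jc by auto
  have s1: "R``{(a,b)} \<otimes>\<^bsub>P\<^esub> R``{(u \<otimes>\<^bsub>M\<^esub> t, \<one>\<^bsub>N\<^esub>)} = R``{(a \<otimes>\<^bsub>M\<^esub> u, b \<otimes>\<^bsub>N\<^esub> \<phi> t)}"
  proof -
    have "R``{(a,b)} \<otimes>\<^bsub>P\<^esub> R``{(u \<otimes>\<^bsub>M\<^esub> t, \<one>\<^bsub>N\<^esub>)} = R``{((a \<otimes>\<^bsub>M\<^esub> u) \<otimes>\<^bsub>M\<^esub> t, b)}"
      using Pmult ab c by (simp add: M.m_assoc)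
    also have "\<dots> = R``{(a \<otimes>\<^bsub>M\<^esub> u, \<phi> t \<otimes>\<^bsub>N\<^esub> b)}" using Rstep[OF tt(1), of "a \<otimes>\<^bsub>M\<^esub> u" b] ab c Rcl by simp
    finally show ?thesis using ab c by (simp add: N.m_comm)
  qed
  have s2: "R``{(a',b')} \<otimes>\<^bsub>P\<^esub> R``{(v \<otimes>\<^bsub>M\<^esub> t', \<one>\<^bsub>N\<^esub>)} = R``{(a' \<otimes>\<^bsub>M\<^esub> v, b' \<otimes>\<^bsub>N\<^esub> \<phi> t')}"
  proof -
    have "R``{(a',b')} \<otimes>\<^bsub>P\<^esub> R``{(v \<otimes>\<^bsub>M\<^esub> t', \<one>\<^bsub>N\<^esub>)} = R``{((a' \<otimes>\<^bsub>M\<^esub> v) \<otimes>\<^bsub>M\<^esub> t', b')}"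
      using Pmult ab c by (simp add: M.m_assoc)
    also have "\<dots> = R``{(a' \<otimes>\<^bsub>M\<^esub> v, \<phi> t' \<otimes>\<^bsub>N\<^esub> b')}" using Rstep[OF tt(2), of "a' \<otimes>\<^bsub>M\<^esub> v" b'] ab c Rcl by simp
    finally show ?thesis using ab c by (simp add: N.m_comm)
  qed
  have U: "R``{(u \<otimes>\<^bsub>M\<^esub> t, \<one>\<^bsub>N\<^esub>)} \<in> I'" using uv tt I_mult by (auto simp: iota1_eq)
  have V: "R``{(v \<otimes>\<^bsub>M\<^esub> t', \<one>\<^bsub>N\<^esub>)} \<in> I'" using uv tt I_mult by (auto simp: iota1_eq)
  show ?thesis
  proof (rule icI[OF _ _ U V])
    show "R``{(a,b)} \<in> carrier P" "R``{(a',b')} \<in> carrier P" using Rin ab by auto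
    show "R``{(a,b)} \<otimes>\<^bsub>P\<^esub> R``{(u \<otimes>\<^bsub>M\<^esub> t, \<one>\<^bsub>N\<^esub>)} = R``{(a',b')} \<otimes>\<^bsub>P\<^esub> R``{(v \<otimes>\<^bsub>M\<^esub> t', \<one>\<^bsub>N\<^esub>)}"
      unfolding s1 s2 using uv(3) tt(3) by simp
  qed
qed

definition Phi where
  "Phi X = (EM``{fst (SOME p. p \<in> (SOME A. A \<in> X))}, EN``{snd (SOME p. p \<in> (SOME A. A \<in> X))})"

lemma Phi_eq:
  assumes ab: "a \<in> carrier M" "b \<in> carrier N"
  shows "Phi (E``{R``{(a,b)}}) = (EM``{a}, EN``{b})"
proof -
  let ?A = "R``{(a,b)}"
  let ?B = "SOME A. A \<in> E``{?A}"
  have A: "?A \<in> carrier P" using Rin ab by simp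
  have AB: "(?A, ?B) \<in> E" using some_class(1)[OF Eeq A] .
  then have "?B \<in> carrier P" using Eeq unfolding equiv_def by blast
  then obtain c d where cd: "?B = R``{(c,d)}" "c \<in> carrier M" "d \<in> carrier N" by (rule Pcases)
  let ?q = "SOME p. p \<in> R``{(c,d)}"
  have r: "((c,d), ?q) \<in> R" using some_class(1)[OF Req] cd by simp
  have 1: "(c, fst ?q) \<in> EM" "(d, snd ?q) \<in> EN" using R_EM[OF r] by simp_all
  have 2: "(a, c) \<in> EM" "(b, d) \<in> EN" using E_to ab cd AB by auto
  have "(a, fst ?q) \<in> EM" using 1 2 EMeq unfolding equiv_def by (meson transE)
  moreover have "(b, snd ?q) \<in> EN" using 1 2 ENeq unfolding equiv_def by (meson transE)
  ultimately have e: "EM``{a} = EM``{fst ?q}" "EN``{b} = EN``{snd ?q}"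
    using equiv_class_eq[OF EMeq] equiv_class_eq[OF ENeq] by blast+
  have "Phi (E``{?A}) = (EM``{fst ?q}, EN``{snd ?q})" by (simp only: Phi_def cd(1))
  then show ?thesis using e by simp
qed

lemma Qcases:
  assumes "X \<in> carrier (quotient_monoid P E)"
  obtains a b where "X = E``{R``{(a,b)}}" "a \<in> carrier M" "b \<in> carrier N"
proof -
  obtain A where "X = E``{A}" "A \<in> carrier P" using assms by (auto simp: quot_carrier elim!: quotientE)
  then show ?thesis using that by (metis Pcases)
qed

lemma quot_iso: "quotient_by_ideal P I' \<cong> (quotient_by_ideal M I \<times>\<times> quotient_by_ideal N J)"
proof -
  have tc: "carrier (quotient_by_ideal M I \<times>\<times> quotient_by_ideal N J) = (carrier M // EM) \<times> (carrier N // EN)"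
    by (simp add: quotient_by_ideal_def quot_carrier)
  have hom: "Phi \<in> hom (quotient_monoid P E) (quotient_by_ideal M I \<times>\<times> quotient_by_ideal N J)"
  proof (rule homI)
    fix X assume "X \<in> carrier (quotient_monoid P E)"
    then obtain a b where "X = E``{R``{(a,b)}}" "a \<in> carrier M" "b \<in> carrier N" by (rule Qcases)
    then show "Phi X \<in> carrier (quotient_by_ideal M I \<times>\<times> quotient_by_ideal N J)"
      using Phi_eq tc by (simp add: quotientI)
  next
    fix X Y assume "X \<in> carrier (quotient_monoid P E)" "Y \<in> carrier (quotient_monoid P E)"
    then obtain a b c d where ab: "X = E``{R``{(a,b)}}" "a \<in> carrier M" "b \<in> carrier N"
      and cd: "Y = E``{R``{(c,d)}}" "c \<in> carrier M" "d \<in> carrier N" by (metis Qcases)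
    have "X \<otimes>\<^bsub>quotient_monoid P E\<^esub> Y = E``{R``{(a \<otimes>\<^bsub>M\<^esub> c, b \<otimes>\<^bsub>N\<^esub> d)}}"
      using quot_mult[OF Ec] ab cd Rin Pmult by simp
    then have "Phi (X \<otimes>\<^bsub>quotient_monoid P E\<^esub> Y) = (EM``{a \<otimes>\<^bsub>M\<^esub> c}, EN``{b \<otimes>\<^bsub>N\<^esub> d})"
      using Phi_eq ab cd by simp
    also have "\<dots> = Phi X \<otimes>\<^bsub>quotient_by_ideal M I \<times>\<times> quotient_by_ideal N J\<^esub> Phi Y"
      using Phi_eq ab cd quot_mult[OF EMc] quot_mult[OF ENc] by (simp add: quotient_by_ideal_def)
    finally show "Phi (X \<otimes>\<^bsub>quotient_monoid P E\<^esub> Y) = Phi X \<otimes>\<^bsub>quotient_by_ideal M I \<times>\<times> quotient_by_ideal N J\<^esub> Phi Y" .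
  qed
  have inj: "inj_on Phi (carrier (quotient_monoid P E))"
  proof (rule inj_onI)
    fix X Y assume "X \<in> carrier (quotient_monoid P E)" "Y \<in> carrier (quotient_monoid P E)" and eq: "Phi X = Phi Y"
    then obtain a b c d where ab: "X = E``{R``{(a,b)}}" "a \<in> carrier M" "b \<in> carrier N"
      and cd: "Y = E``{R``{(c,d)}}" "c \<in> carrier M" "d \<in> carrier N" by (metis Qcases)
    have "EM``{a} = EM``{c}" "EN``{b} = EN``{d}" using eq Phi_eq ab cd by auto
    then have "(a, c) \<in> EM" "(b, d) \<in> EN"
      using eq_equiv_class_iff[OF EMeq] eq_equiv_class_iff[OF ENeq] ab cd by auto
    then have "(R``{(a,b)}, R``{(c,d)}) \<in> E" using E_from ab cd by simp
    then show "X = Y" using ab cd equiv_class_eq[OF Eeq] by simp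
  qed
  have sur: "Phi ` carrier (quotient_monoid P E) = carrier (quotient_by_ideal M I \<times>\<times> quotient_by_ideal N J)"
  proof
    show "Phi ` carrier (quotient_monoid P E) \<subseteq> carrier (quotient_by_ideal M I \<times>\<times> quotient_by_ideal N J)"
      using hom_carrier[OF hom] .
    show "carrier (quotient_by_ideal M I \<times>\<times> quotient_by_ideal N J) \<subseteq> Phi ` carrier (quotient_monoid P E)"
    proof
      fix z assume "z \<in> carrier (quotient_by_ideal M I \<times>\<times> quotient_by_ideal N J)"
      then obtain a b where ab: "z = (EM``{a}, EN``{b})" "a \<in> carrier M" "b \<in> carrier N"
        using tc by (auto elim!: quotientE)
      have "E``{R``{(a,b)}} \<in> carrier (quotient_monoid P E)" using Rin ab by (simp add: quot_carrier quotientI)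
      then show "z \<in> Phi ` carrier (quotient_monoid P E)" using Phi_eq ab by force
    qed
  qed
  have "Phi \<in> iso (quotient_monoid P E) (quotient_by_ideal M I \<times>\<times> quotient_by_ideal N J)"
    unfolding iso_def bij_betw_def using hom inj sur by simp
  then show ?thesis unfolding is_iso_def quotient_by_ideal_def by auto
qed

end


context PO begin

lemma embed:
  fixes Q :: "'d monoid"
  assumes cQ: "comm_monoid Q" and rQ: "refinement_monoid Q"
    and t1: "\<theta>\<^sub>1 \<in> hom M Q" and t2: "\<theta>\<^sub>2 \<in> hom N Q"
    and i1: "inj_on \<theta>\<^sub>1 (carrier M)" and i2: "inj_on \<theta>\<^sub>2 (carrier N)"
    and tt: "\<forall>s\<in>I. \<theta>\<^sub>1 s = \<theta>\<^sub>2 (\<phi> s)"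
    and int: "\<theta>\<^sub>1 ` carrier M \<inter> \<theta>\<^sub>2 ` carrier N = \<theta>\<^sub>1 ` I"
    and o1: "order_ideal Q (\<theta>\<^sub>1 ` carrier M)" and o2: "order_ideal Q (\<theta>\<^sub>2 ` carrier N)"
  shows "\<exists>\<iota>\<in>hom P Q. inj_on \<iota> (carrier P) \<and>
           (\<forall>x\<in>carrier M. \<iota> (iota1 M N I \<phi> x) = \<theta>\<^sub>1 x) \<and> (\<forall>y\<in>carrier N. \<iota> (iota2 M N I \<phi> y) = \<theta>\<^sub>2 y)"
proof -
  interpret Q: comm_monoid Q by fact
  define h where "h \<equiv> \<lambda>A. (\<lambda>p. \<theta>\<^sub>1 (fst p) \<otimes>\<^bsub>Q\<^esub> \<theta>\<^sub>2 (snd p)) (SOME p. p \<in> A)"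
  note U = univ[OF cQ t1 t2 tt, folded h_def]
  have c1: "\<And>x. x \<in> carrier M \<Longrightarrow> \<theta>\<^sub>1 x \<in> carrier Q" using t1 by (simp add: hom_in_carrier)
  have c2: "\<And>x. x \<in> carrier N \<Longrightarrow> \<theta>\<^sub>2 x \<in> carrier Q" using t2 by (simp add: hom_in_carrier)
  have m1: "\<And>x y. x \<in> carrier M \<Longrightarrow> y \<in> carrier M \<Longrightarrow> \<theta>\<^sub>1 (x \<otimes>\<^bsub>M\<^esub> y) = \<theta>\<^sub>1 x \<otimes>\<^bsub>Q\<^esub> \<theta>\<^sub>1 y"
    using t1 by (simp add: hom_mult)
  have m2: "\<And>x y. x \<in> carrier N \<Longrightarrow> y \<in> carrier N \<Longrightarrow> \<theta>\<^sub>2 (x \<otimes>\<^bsub>N\<^esub> y) = \<theta>\<^sub>2 x \<otimes>\<^bsub>Q\<^esub> \<theta>\<^sub>2 y"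
    using t2 by (simp add: hom_mult)
  have d1: "\<And>x y. x \<in> carrier Q \<Longrightarrow> y \<in> carrier Q \<Longrightarrow> x \<otimes>\<^bsub>Q\<^esub> y \<in> \<theta>\<^sub>1 ` carrier M \<Longrightarrow> x \<in> \<theta>\<^sub>1 ` carrier M \<and> y \<in> \<theta>\<^sub>1 ` carrier M"
    using o1 unfolding order_ideal_def by blast
  have d2: "\<And>x y. x \<in> carrier Q \<Longrightarrow> y \<in> carrier Q \<Longrightarrow> x \<otimes>\<^bsub>Q\<^esub> y \<in> \<theta>\<^sub>2 ` carrier N \<Longrightarrow> x \<in> \<theta>\<^sub>2 ` carrier N \<and> y \<in> \<theta>\<^sub>2 ` carrier N"
    using o2 unfolding order_ideal_def by blast
  have inj: "inj_on h (carrier P)"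
  proof (rule inj_onI)
    fix A B assume A: "A \<in> carrier P" and B: "B \<in> carrier P" and hAB: "h A = h B"
    obtain a b where ab: "A = R``{(a,b)}" "a \<in> carrier M" "b \<in> carrier N" using A by (rule Pcases)
    obtain a' b' where ab': "B = R``{(a',b')}" "a' \<in> carrier M" "b' \<in> carrier N" using B by (rule Pcases)
    have hA: "h A = \<theta>\<^sub>1 a \<otimes>\<^bsub>Q\<^esub> \<theta>\<^sub>2 b" unfolding ab(1) using U(2)[OF ab(2,3)] by (simp add: h_def)
    have hB: "h B = \<theta>\<^sub>1 a' \<otimes>\<^bsub>Q\<^esub> \<theta>\<^sub>2 b'" unfolding ab'(1) using U(2)[OF ab'(2,3)] by (simp add: h_def)
    have eq: "\<theta>\<^sub>1 a \<otimes>\<^bsub>Q\<^esub> \<theta>\<^sub>2 b = \<theta>\<^sub>1 a' \<otimes>\<^bsub>Q\<^esub> \<theta>\<^sub>2 b'" using hAB hA hB by simp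
    note ref = rQ[unfolded refinement_monoid_def, rule_format, OF c1[OF ab(2)] c2[OF ab(3)] c1[OF ab'(2)] c2[OF ab'(3)] eq]
    then obtain x11 x12 x21 x22 where x: "x11 \<in> carrier Q" "x12 \<in> carrier Q" "x21 \<in> carrier Q" "x22 \<in> carrier Q"
      "\<theta>\<^sub>1 a = x11 \<otimes>\<^bsub>Q\<^esub> x12" "\<theta>\<^sub>2 b = x21 \<otimes>\<^bsub>Q\<^esub> x22" "\<theta>\<^sub>1 a' = x11 \<otimes>\<^bsub>Q\<^esub> x21" "\<theta>\<^sub>2 b' = x12 \<otimes>\<^bsub>Q\<^esub> x22"
      using ref by blast
    have "x11 \<in> \<theta>\<^sub>1 ` carrier M" "x12 \<in> \<theta>\<^sub>1 ` carrier M" using d1[OF x(1,2)] x(5) imageI[OF ab(2), of "\<theta>\<^sub>1"] by auto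
    have "x21 \<in> \<theta>\<^sub>1 ` carrier M" using d1[OF x(1,3)] x(7) imageI[OF ab'(2), of "\<theta>\<^sub>1"] by auto
    have "x21 \<in> \<theta>\<^sub>2 ` carrier N" "x22 \<in> \<theta>\<^sub>2 ` carrier N" using d2[OF x(3,4)] x(6) imageI[OF ab(3), of "\<theta>\<^sub>2"] by auto
    have "x12 \<in> \<theta>\<^sub>2 ` carrier N" using d2[OF x(2,4)] x(8) imageI[OF ab'(3), of "\<theta>\<^sub>2"] by auto
    obtain m where m: "m \<in> carrier M" "x11 = \<theta>\<^sub>1 m" using \<open>x11 \<in> \<theta>\<^sub>1 ` carrier M\<close> by auto
    obtain n where n: "n \<in> carrier N" "x22 = \<theta>\<^sub>2 n" using \<open>x22 \<in> \<theta>\<^sub>2 ` carrier N\<close> by auto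
    obtain s where s: "s \<in> I" "x12 = \<theta>\<^sub>1 s"
      using int \<open>x12 \<in> \<theta>\<^sub>1 ` carrier M\<close> \<open>x12 \<in> \<theta>\<^sub>2 ` carrier N\<close> by blast
    obtain t where t: "t \<in> I" "x21 = \<theta>\<^sub>1 t"
      using int \<open>x21 \<in> \<theta>\<^sub>1 ` carrier M\<close> \<open>x21 \<in> \<theta>\<^sub>2 ` carrier N\<close> by blast
    have sc: "s \<in> carrier M" "t \<in> carrier M" "\<phi> s \<in> carrier N" "\<phi> t \<in> carrier N" using s t Ic Jc by auto
    have "\<theta>\<^sub>1 a = \<theta>\<^sub>1 (m \<otimes>\<^bsub>M\<^esub> s)" using x(5) m s sc m1 by simp
    then have ea: "a = m \<otimes>\<^bsub>M\<^esub> s" using i1 ab m sc by (simp add: inj_on_def)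
    have "\<theta>\<^sub>1 a' = \<theta>\<^sub>1 (m \<otimes>\<^bsub>M\<^esub> t)" using x(7) m t sc m1 by simp
    then have ea': "a' = m \<otimes>\<^bsub>M\<^esub> t" using i1 ab' m sc by (simp add: inj_on_def)
    have "\<theta>\<^sub>2 b = \<theta>\<^sub>2 (\<phi> t \<otimes>\<^bsub>N\<^esub> n)" using x(6) n t sc m2 tt by simp
    then have eb: "b = \<phi> t \<otimes>\<^bsub>N\<^esub> n" using i2 ab n sc by (simp add: inj_on_def)
    have "\<theta>\<^sub>2 b' = \<theta>\<^sub>2 (\<phi> s \<otimes>\<^bsub>N\<^esub> n)" using x(8) n s sc m2 tt by simp
    then have eb': "b' = \<phi> s \<otimes>\<^bsub>N\<^esub> n" using i2 ab' n sc by (simp add: inj_on_def)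
    have r1: "(((m \<otimes>\<^bsub>M\<^esub> s) \<otimes>\<^bsub>M\<^esub> t, n), (a, b)) \<in> R" using Rstep[OF t(1), of "m \<otimes>\<^bsub>M\<^esub> s" n] ea eb m n sc by simp
    have r2: "(((m \<otimes>\<^bsub>M\<^esub> t) \<otimes>\<^bsub>M\<^esub> s, n), (a', b')) \<in> R" using Rstep[OF s(1), of "m \<otimes>\<^bsub>M\<^esub> t" n] ea' eb' m n sc by simp
    have "(m \<otimes>\<^bsub>M\<^esub> s) \<otimes>\<^bsub>M\<^esub> t = (m \<otimes>\<^bsub>M\<^esub> t) \<otimes>\<^bsub>M\<^esub> s" using m sc by (simp add: M.m_ac)
    then show "A = B" using r1 r2 ab ab' Rcl by metis
  qed
  have "h \<in> hom P Q" using U(1) by (simp add: h_def)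
  moreover have "\<forall>x\<in>carrier M. h (iota1 M N I \<phi> x) = \<theta>\<^sub>1 x" using U(3) by (simp add: h_def)
  moreover have "\<forall>y\<in>carrier N. h (iota2 M N I \<phi> y) = \<theta>\<^sub>2 y" using U(4) by (simp add: h_def)
  ultimately show ?thesis using inj by blast
qed

end


theorem mainTheorem8:
  fixes M :: "'a monoid" and N :: "'b monoid" and I :: "'a set" and \<phi> :: "'a \<Rightarrow> 'b"
  assumes "comm_monoid M" and "comm_monoid N"
    and "conical M" and "conical N"
    and "order_ideal M I" and "order_ideal N (\<phi> ` I)"
    and "\<phi> \<in> iso (M\<lparr>carrier := I\<rparr>) (N\<lparr>carrier := \<phi> ` I\<rparr>)"
  defines "P \<equiv> pushout_monoid M N I \<phi>"
    and "\<iota>\<^sub>1 \<equiv> iota1 M N I \<phi>" and "\<iota>\<^sub>2 \<equiv> iota2 M N I \<phi>"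
  shows
    \<comment> \<open>(1) pushout\<close>
    "(comm_monoid P \<and> \<iota>\<^sub>1 \<in> hom M P \<and> \<iota>\<^sub>2 \<in> hom N P \<and> (\<forall>s\<in>I. \<iota>\<^sub>1 s = \<iota>\<^sub>2 (\<phi> s)) \<and>
      (\<forall>(T :: 'c monoid) f g. comm_monoid T \<and> f \<in> hom M T \<and> g \<in> hom N T \<and>
          (\<forall>s\<in>I. f s = g (\<phi> s)) \<longrightarrow>
        (\<exists>h\<in>hom P T. (\<forall>x\<in>carrier M. h (\<iota>\<^sub>1 x) = f x) \<and> (\<forall>y\<in>carrier N. h (\<iota>\<^sub>2 y) = g y) \<and>
           (\<forall>h'\<in>hom P T. (\<forall>x\<in>carrier M. h' (\<iota>\<^sub>1 x) = f x) \<and> (\<forall>y\<in>carrier N. h' (\<iota>\<^sub>2 y) = g y)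
               \<longrightarrow> (\<forall>p\<in>carrier P. h' p = h p)))))
     \<comment> \<open>(2) injectivity\<close>
     \<and> inj_on \<iota>\<^sub>1 (carrier M) \<and> inj_on \<iota>\<^sub>2 (carrier N)
     \<comment> \<open>(3) the order-ideal I' and the quotient\<close>
     \<and> \<iota>\<^sub>1 ` I = \<iota>\<^sub>2 ` (\<phi> ` I) \<and> order_ideal P (\<iota>\<^sub>1 ` I)
     \<and> quotient_by_ideal P (\<iota>\<^sub>1 ` I) \<cong> (quotient_by_ideal M I \<times>\<times> quotient_by_ideal N (\<phi> ` I))
     \<comment> \<open>(4) embedding into conical refinement monoids\<close>
     \<and> (\<forall>(Q :: 'd monoid) \<theta>\<^sub>1 \<theta>\<^sub>2. comm_monoid Q \<and> conical Q \<and> refinement_monoid Q \<and>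
          \<theta>\<^sub>1 \<in> hom M Q \<and> \<theta>\<^sub>2 \<in> hom N Q \<and> inj_on \<theta>\<^sub>1 (carrier M) \<and> inj_on \<theta>\<^sub>2 (carrier N) \<and>
          (\<forall>s\<in>I. \<theta>\<^sub>1 s = \<theta>\<^sub>2 (\<phi> s)) \<and>
          \<theta>\<^sub>1 ` carrier M \<inter> \<theta>\<^sub>2 ` carrier N = \<theta>\<^sub>1 ` I \<and> \<theta>\<^sub>1 ` I = \<theta>\<^sub>2 ` (\<phi> ` I) \<and>
          order_ideal Q (\<theta>\<^sub>1 ` carrier M) \<and> order_ideal Q (\<theta>\<^sub>2 ` carrier N) \<longrightarrow>
        (\<exists>\<iota>\<in>hom P Q. inj_on \<iota> (carrier P) \<and>
           (\<forall>x\<in>carrier M. \<iota> (\<iota>\<^sub>1 x) = \<theta>\<^sub>1 x) \<and> (\<forall>y\<in>carrier N. \<iota> (\<iota>\<^sub>2 y) = \<theta>\<^sub>2 y)))"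
proof -
  interpret PO M N I \<phi> unfolding PO_def using assms by blast
  have U: "\<forall>(T :: 'c monoid) f g. comm_monoid T \<and> f \<in> hom M T \<and> g \<in> hom N T \<and>
          (\<forall>s\<in>I. f s = g (\<phi> s)) \<longrightarrow>
        (\<exists>h\<in>hom P T. (\<forall>x\<in>carrier M. h (\<iota>\<^sub>1 x) = f x) \<and> (\<forall>y\<in>carrier N. h (\<iota>\<^sub>2 y) = g y) \<and>
           (\<forall>h'\<in>hom P T. (\<forall>x\<in>carrier M. h' (\<iota>\<^sub>1 x) = f x) \<and> (\<forall>y\<in>carrier N. h' (\<iota>\<^sub>2 y) = g y)
               \<longrightarrow> (\<forall>p\<in>carrier P. h' p = h p)))"
  proof (intro allI impI)
    fix T :: "'c monoid" and f g
    assume h: "comm_monoid T \<and> f \<in> hom M T \<and> g \<in> hom N T \<and> (\<forall>s\<in>I. f s = g (\<phi> s))"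
    then have cT: "comm_monoid T" and f: "f \<in> hom M T" and g: "g \<in> hom N T" and fg: "\<forall>s\<in>I. f s = g (\<phi> s)"
      by auto
    note V = univ[OF cT f g fg]
    show "\<exists>h\<in>hom P T. (\<forall>x\<in>carrier M. h (\<iota>\<^sub>1 x) = f x) \<and> (\<forall>y\<in>carrier N. h (\<iota>\<^sub>2 y) = g y) \<and>
           (\<forall>h'\<in>hom P T. (\<forall>x\<in>carrier M. h' (\<iota>\<^sub>1 x) = f x) \<and> (\<forall>y\<in>carrier N. h' (\<iota>\<^sub>2 y) = g y)
               \<longrightarrow> (\<forall>p\<in>carrier P. h' p = h p))"
      unfolding P_def \<iota>\<^sub>1_def \<iota>\<^sub>2_def
      by (rule bexI[OF _ V(1)]) (use V(3,4,5) in blast)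
  qed
  have E4: "\<forall>(Q :: 'd monoid) \<theta>\<^sub>1 \<theta>\<^sub>2. comm_monoid Q \<and> conical Q \<and> refinement_monoid Q \<and>
          \<theta>\<^sub>1 \<in> hom M Q \<and> \<theta>\<^sub>2 \<in> hom N Q \<and> inj_on \<theta>\<^sub>1 (carrier M) \<and> inj_on \<theta>\<^sub>2 (carrier N) \<and>
          (\<forall>s\<in>I. \<theta>\<^sub>1 s = \<theta>\<^sub>2 (\<phi> s)) \<and>
          \<theta>\<^sub>1 ` carrier M \<inter> \<theta>\<^sub>2 ` carrier N = \<theta>\<^sub>1 ` I \<and> \<theta>\<^sub>1 ` I = \<theta>\<^sub>2 ` (\<phi> ` I) \<and>
          order_ideal Q (\<theta>\<^sub>1 ` carrier M) \<and> order_ideal Q (\<theta>\<^sub>2 ` carrier N) \<longrightarrow>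
        (\<exists>\<iota>\<in>hom P Q. inj_on \<iota> (carrier P) \<and>
           (\<forall>x\<in>carrier M. \<iota> (\<iota>\<^sub>1 x) = \<theta>\<^sub>1 x) \<and> (\<forall>y\<in>carrier N. \<iota> (\<iota>\<^sub>2 y) = \<theta>\<^sub>2 y))"
    unfolding P_def \<iota>\<^sub>1_def \<iota>\<^sub>2_def by (intro allI impI, elim conjE, rule embed) assumption+
  have img: "\<iota>\<^sub>1 ` I = \<iota>\<^sub>2 ` (\<phi> ` I)"
  proof -
    have "\<iota>\<^sub>1 ` I = (\<iota>\<^sub>2 \<circ> \<phi>) ` I" unfolding \<iota>\<^sub>1_def \<iota>\<^sub>2_def
      by (rule image_cong) (auto simp: iota12)
    then show ?thesis by (simp add: image_comp)
  qed
  have i12: "\<forall>s\<in>I. \<iota>\<^sub>1 s = \<iota>\<^sub>2 (\<phi> s)" unfolding \<iota>\<^sub>1_def \<iota>\<^sub>2_def using iota12 by blast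
  have c: "comm_monoid P" "\<iota>\<^sub>1 \<in> hom M P" "\<iota>\<^sub>2 \<in> hom N P" "inj_on \<iota>\<^sub>1 (carrier M)" "inj_on \<iota>\<^sub>2 (carrier N)"
    "order_ideal P (\<iota>\<^sub>1 ` I)" "quotient_by_ideal P (\<iota>\<^sub>1 ` I) \<cong> (quotient_by_ideal M I \<times>\<times> quotient_by_ideal N (\<phi> ` I))"
    unfolding P_def \<iota>\<^sub>1_def \<iota>\<^sub>2_def using cP iota1_hom iota2_hom inj1 inj2 oI' quot_iso by simp_all
  show ?thesis
    using U E4 img i12 c by (intro conjI) assumption+
qed

end
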